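(* Let $\mathcal{C}$ be a hypergraph and $F$ an edge of $\mathcal{C}$. Then there is a long exact sequence of reduced homology groups (integer coefficients) $$\cdots\to \tilde H_{i-|F|+1}(\operatorname{Ind}(\mathcal{C}:F))\to \tilde H_i(\operatorname{Ind}(\mathcal{C}))\to \tilde H_i(\operatorname{Ind}(\mathcal{C}-F))\to \tilde H_{i-|F|}(\operatorname{Ind}(\mathcal{C}:F))\to\cdots$$
   Context: A hypergraph $\mathcal{C}$ on a finite vertex set $V$ is a family of pairwise incomparable subsets of $V$ (its edges), each of cardinality at least $2$. The independence complex $\operatorname{Ind}(\mathcal{C})$ is the simplicial complex on $V$ whose faces are the subsets of $V$ containing no edge of $\mathcal{C}$. For an edge $F$: $\mathcal{C}-F$ is the hypergraph on $V$ with edge set $\mathcal{C}\setminus\{F\}$; $N_{\mathcal{C}}(F)=\bigcup\{E\setminus F : E\in\mathcal{C},\ |E\setminus F|=1\}$; and $\mathcal{C}:F$ is the hypergraph on $V\setminus(F\cup N_{\mathcal{C}}(F))$ whose edges are the members of cardinality at least $2$ among the inclusion-minimal members of the family $\{E\setminus F : E\in \mathcal{C}-F\}$ (equivalently, $\operatorname{Ind}(\mathcal{C}:F)$ is the link of $F$ in $\operatorname{Ind}(\mathcal{C}-F)$). *)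

theory Defs
  imports "HOL-Algebra.Free_Abelian_Groups" "HOL-Algebra.Exact_Sequence" "HOL-Algebra.Coset"
begin

definition hypergraph :: "'a set \<Rightarrow> 'a set set \<Rightarrow> bool" where
  "hypergraph V C \<longleftrightarrow> finite V \<and> (\<forall>E\<in>C. E \<subseteq> V \<and> card E \<ge> 2)
      \<and> (\<forall>E\<in>C. \<forall>E'\<in>C. E \<subseteq> E' \<longrightarrow> E = E')"

definition Ind :: "'a set \<Rightarrow> 'a set set \<Rightarrow> 'a set set" where
  "Ind V C = {\<sigma>. \<sigma> \<subseteq> V \<and> (\<forall>E\<in>C. \<not> E \<subseteq> \<sigma>)}"

text \<open>C - F (same vertex set V, edge F deleted).\<close>
definition hdel :: "'a set set \<Rightarrow> 'a set \<Rightarrow> 'a set set" where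
  "hdel C F = C - {F}"

definition hnbhd :: "'a set set \<Rightarrow> 'a set \<Rightarrow> 'a set" where
  "hnbhd C F = \<Union>{E - F | E. E \<in> C \<and> card (E - F) = 1}"

text \<open>C : F lives on the vertex set V - (F \<union> N_C(F)).\<close>
definition hcolon_vertices :: "'a set \<Rightarrow> 'a set set \<Rightarrow> 'a set \<Rightarrow> 'a set" where
  "hcolon_vertices V C F = V - (F \<union> hnbhd C F)"

definition hcolon_edges :: "'a set set \<Rightarrow> 'a set \<Rightarrow> 'a set set" where
  "hcolon_edges C F =
     (let M = {E - F | E. E \<in> hdel C F}
      in {A \<in> M. (\<forall>B\<in>M. B \<subseteq> A \<longrightarrow> B = A) \<and> card A \<ge> 2})"

text \<open>The faces of
  dimension n are those of cardinality n+1; the empty face has dimension -1 (augmentation),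
  giving reduced homology. Orientation via the linear order of the vertex type.\<close>

definition simp_faces :: "'a set set \<Rightarrow> int \<Rightarrow> 'a set set" where
  "simp_faces K n = {\<sigma> \<in> K. int (card \<sigma>) = n + 1}"

definition simp_chain_group :: "'a set set \<Rightarrow> int \<Rightarrow> ('a set \<Rightarrow>\<^sub>0 int) monoid" where
  "simp_chain_group K n = free_Abelian_group (simp_faces K n)"

definition simp_bd_simplex :: "'a::linorder set \<Rightarrow> ('a set \<Rightarrow>\<^sub>0 int)" where
  "simp_bd_simplex \<sigma> =
     (\<Sum>v\<in>\<sigma>. frag_cmul ((-1) ^ card {u\<in>\<sigma>. u < v}) (frag_of (\<sigma> - {v})))"

definition simp_boundary :: "('a::linorder set \<Rightarrow>\<^sub>0 int) \<Rightarrow> ('a set \<Rightarrow>\<^sub>0 int)" where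
  "simp_boundary = frag_extend simp_bd_simplex"

definition simp_cycles :: "'a::linorder set set \<Rightarrow> int \<Rightarrow> ('a set \<Rightarrow>\<^sub>0 int) set" where
  "simp_cycles K n = {c \<in> carrier (simp_chain_group K n). simp_boundary c = 0}"

definition simp_boundaries :: "'a::linorder set set \<Rightarrow> int \<Rightarrow> ('a set \<Rightarrow>\<^sub>0 int) set" where
  "simp_boundaries K n = simp_boundary ` carrier (simp_chain_group K (n + 1))"

definition reduced_homology :: "'a::linorder set set \<Rightarrow> int \<Rightarrow> ('a set \<Rightarrow>\<^sub>0 int) set monoid" where
  "reduced_homology K n =
     subgroup_generated (simp_chain_group K n) (simp_cycles K n) Mod simp_boundaries K n"

end

theory Submission
  imports Defs
begin


lemma bd_of: "simp_boundary (frag_of \<sigma>) = simp_bd_simplex \<sigma>"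
  by (simp add: simp_boundary_def)

lemma bd_add: "simp_boundary (a + b) = simp_boundary a + simp_boundary b"
  by (simp add: simp_boundary_def frag_extend_add)
lemma bd_diff: "simp_boundary (a - b) = simp_boundary a - simp_boundary b"
  by (simp add: simp_boundary_def frag_extend_diff)
lemma bd_minus: "simp_boundary (- a) = - simp_boundary a"
  by (simp add: simp_boundary_def frag_extend_minus)
lemma bd_0[simp]: "simp_boundary 0 = 0"
  by (simp add: simp_boundary_def)
lemma bd_cmul: "simp_boundary (frag_cmul c a) = frag_cmul c (simp_boundary a)"
  by (simp add: simp_boundary_def frag_extend_cmul)
lemma bd_sum: "finite I \<Longrightarrow> simp_boundary (\<Sum>i\<in>I. g i) = (\<Sum>i\<in>I. simp_boundary (g i))"
  by (simp add: simp_boundary_def frag_extend_sum o_def)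

lemma frag_extend_extend:
  "frag_extend f (frag_extend g c) = frag_extend (\<lambda>x. frag_extend f (g x)) c"
  using subset_UNIV
  by (induction c rule: frag_induction) (auto simp: frag_extend_diff)

lemma sum_antisym_zero:
  fixes T :: "'b \<times> 'b \<Rightarrow> ('c \<Rightarrow>\<^sub>0 int)"
  assumes P: "finite P" "\<And>v w. (v,w) \<in> P \<Longrightarrow> (w,v) \<in> P"
    and T: "\<And>v w. (v,w) \<in> P \<Longrightarrow> T (w,v) = - T (v,w)"
  shows "sum T P = 0"
proof -
  have bij: "bij_betw (\<lambda>(v,w). (w,v)) P P"
    apply (rule bij_betwI[where g="\<lambda>(v,w). (w,v)"])
       apply (clarsimp simp: Pi_def, erule P(2))
      apply (clarsimp simp: Pi_def, erule P(2))
     apply auto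
    done
  have "sum T P = sum (T \<circ> (\<lambda>(v,w). (w,v))) P"
    using sum.reindex_bij_betw[OF bij, of T] by simp
  also have "\<dots> = sum (\<lambda>p. - T p) P"
    by (rule sum.cong) (auto simp: T)
  also have "\<dots> = - sum T P" by (simp add: sum_negf)
  finally have e: "sum T P = - sum T P" .
  show ?thesis
  proof (rule poly_mapping_eqI)
    fix k
    have "Poly_Mapping.lookup (sum T P) k = Poly_Mapping.lookup (- sum T P) k"
      using e by (rule arg_cong)
    then have "Poly_Mapping.lookup (sum T P) k = - Poly_Mapping.lookup (sum T P) k"
      by (simp only: lookup_uminus)
    then show "Poly_Mapping.lookup (sum T P) k = Poly_Mapping.lookup 0 k" by simp
  qed
qed

definition sg :: "'a::linorder set \<Rightarrow> 'a \<Rightarrow> int" where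
  "sg \<sigma> v = (-1) ^ card {u\<in>\<sigma>. u < v}"

lemma bd_simplex_sg: "simp_bd_simplex \<sigma> = (\<Sum>v\<in>\<sigma>. frag_cmul (sg \<sigma> v) (frag_of (\<sigma> - {v})))"
  by (simp add: simp_bd_simplex_def sg_def)

lemma sg_remove_less:
  assumes "finite \<sigma>" "v \<in> \<sigma>" "w \<in> \<sigma>" "v < w"
  shows "sg (\<sigma> - {v}) w = - sg \<sigma> w" "sg (\<sigma> - {w}) v = sg \<sigma> v"
proof -
  have "{u\<in>\<sigma>. u < w} = insert v {u\<in>\<sigma> - {v}. u < w}" using assms by (auto simp: less_not_sym)
  then have "card {u\<in>\<sigma>. u < w} = Suc (card {u\<in>\<sigma> - {v}. u < w})"
    using assms by (simp add: card_insert_if)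
  then show "sg (\<sigma> - {v}) w = - sg \<sigma> w" by (simp add: sg_def)
  have e2: "{u\<in>\<sigma>. u < v} = {u\<in>\<sigma> - {w}. u < v}" using assms(4) by (auto simp: less_not_sym)
  show "sg (\<sigma> - {w}) v = sg \<sigma> v" unfolding sg_def e2 by (rule refl)
qed

lemma bd_bd_of: "simp_boundary (simp_bd_simplex \<sigma>) = 0"
proof (cases "finite \<sigma>")
  case False then show ?thesis by (simp add: simp_bd_simplex_def)
next
  case True
  let ?T = "\<lambda>(v,w). frag_cmul (sg \<sigma> v * sg (\<sigma> - {v}) w) (frag_of (\<sigma> - {v} - {w}))"
  let ?P = "SIGMA v:\<sigma>. \<sigma> - {v}"
  have "simp_boundary (simp_bd_simplex \<sigma>) =
     (\<Sum>v\<in>\<sigma>. \<Sum>w\<in>\<sigma> - {v}. frag_cmul (sg \<sigma> v * sg (\<sigma> - {v}) w) (frag_of (\<sigma> - {v} - {w})))"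
    using True by (simp add: bd_simplex_sg bd_sum bd_cmul bd_of frag_cmul_sum)
  also have "\<dots> = sum ?T ?P"
    using True by (simp add: sum.Sigma)
  also have "\<dots> = 0"
  proof (rule sum_antisym_zero)
    show "finite ?P" using True by auto
  next
    fix v w assume "(v,w) \<in> ?P" then show "(w,v) \<in> ?P" by auto
  next
    fix v w assume vw: "(v,w) \<in> ?P"
    then have v: "v \<in> \<sigma>" and w: "w \<in> \<sigma>" and ne: "v \<noteq> w" by auto
    have s: "\<sigma> - {w} - {v} = \<sigma> - {v} - {w}" by auto
    show "?T (w,v) = - ?T (v,w)"
    proof (cases "v < w")
      case True
      then show ?thesis using sg_remove_less[OF \<open>finite \<sigma>\<close> v w True] s by (simp add: mult.commute)
    next
      case False
      then have "w < v" using ne by auto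
      then show ?thesis using sg_remove_less[OF \<open>finite \<sigma>\<close> w v] s by (simp add: mult.commute)
    qed
  qed
  finally show ?thesis .
qed

lemma bd_bd: "simp_boundary (simp_boundary c) = 0"
proof -
  have "simp_boundary (simp_boundary c) = frag_extend (\<lambda>x. simp_boundary (simp_bd_simplex x)) c"
    by (simp add: simp_boundary_def frag_extend_extend)
  also have "\<dots> = 0" by (rule frag_extend_eq_0) (simp add: bd_bd_of)
  finally show ?thesis .
qed



definition rc :: "('b \<Rightarrow>\<^sub>0 int) set \<Rightarrow> ('b \<Rightarrow>\<^sub>0 int) \<Rightarrow> ('b \<Rightarrow>\<^sub>0 int) set" where
  "rc B z = (\<Union>h\<in>B. {h + z})"

definition addsub :: "('b \<Rightarrow>\<^sub>0 int) set \<Rightarrow> bool" where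
  "addsub B \<longleftrightarrow> 0 \<in> B \<and> (\<forall>x\<in>B. \<forall>y\<in>B. x - y \<in> B)"

definition lin :: "(('b \<Rightarrow>\<^sub>0 int) \<Rightarrow> ('c \<Rightarrow>\<^sub>0 int)) \<Rightarrow> bool" where
  "lin f \<longleftrightarrow> (\<forall>x y. f (x + y) = f x + f y)"

definition ind :: "('c \<Rightarrow>\<^sub>0 int) set \<Rightarrow> (('b \<Rightarrow>\<^sub>0 int) \<Rightarrow> ('c \<Rightarrow>\<^sub>0 int)) \<Rightarrow> ('b \<Rightarrow>\<^sub>0 int) set \<Rightarrow> ('c \<Rightarrow>\<^sub>0 int) set" where
  "ind B' f X = (\<Union>x\<in>X. rc B' (f x))"

abbreviation Q where "Q S Z B \<equiv> subgroup_generated (free_Abelian_group S) Z Mod B"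

lemma addsub_0: "addsub B \<Longrightarrow> 0 \<in> B" by (simp add: addsub_def)
lemma addsub_diff: "addsub B \<Longrightarrow> x \<in> B \<Longrightarrow> y \<in> B \<Longrightarrow> x - y \<in> B" by (simp add: addsub_def)
lemma addsub_minus: "addsub B \<Longrightarrow> y \<in> B \<Longrightarrow> - y \<in> B"
  using addsub_diff[of B 0 y] by (simp add: addsub_def)
lemma addsub_add: "addsub B \<Longrightarrow> x \<in> B \<Longrightarrow> y \<in> B \<Longrightarrow> x + y \<in> B"
  using addsub_diff[of B x "- y"] addsub_minus[of B y] by simp

lemma lin_0: "lin f \<Longrightarrow> f 0 = 0"
  unfolding lin_def by (metis add_0 add_cancel_right_right)
lemma lin_minus: "lin f \<Longrightarrow> f (- x) = - f x"
  using lin_0[of f] unfolding lin_def by (metis add.right_inverse add_eq_0_iff)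
lemma lin_add: "lin f \<Longrightarrow> f (x + y) = f x + f y"
  unfolding lin_def by blast
lemma lin_diff: "lin f \<Longrightarrow> f (x - y) = f x - f y"
  using lin_add[of f x "- y"] lin_minus[of f y] by simp

lemma subgroup_addsub:
  assumes "addsub A" "A \<subseteq> {c. Poly_Mapping.keys c \<subseteq> S}"
  shows "subgroup A (free_Abelian_group S)"
proof
  show "A \<subseteq> carrier (free_Abelian_group S)" using assms(2) by auto
  fix x y assume "x \<in> A" "y \<in> A"
  then show "x \<otimes>\<^bsub>free_Abelian_group S\<^esub> y \<in> A" using addsub_add[OF assms(1)] by simp
next
  show "\<one>\<^bsub>free_Abelian_group S\<^esub> \<in> A" using addsub_0[OF assms(1)] by simp
next
  fix x assume x: "x \<in> A"
  then have "Poly_Mapping.keys x \<subseteq> S" using assms(2) by auto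
  then show "inv\<^bsub>free_Abelian_group S\<^esub> x \<in> A" using addsub_minus[OF assms(1) x] by simp
qed

lemma rc_eq:
  assumes "addsub B"
  shows "rc B x = rc B y \<longleftrightarrow> x - y \<in> B"
proof
  assume "rc B x = rc B y"
  moreover have "x \<in> rc B x" using addsub_0[OF assms] unfolding rc_def by force
  ultimately have "x \<in> rc B y" by simp
  then obtain h where "h \<in> B" "x = h + y" unfolding rc_def by auto
  then show "x - y \<in> B" by simp
next
  assume d: "x - y \<in> B"
  show "rc B x = rc B y"
  proof
    show "rc B x \<subseteq> rc B y"
    proof
      fix u assume "u \<in> rc B x"
      then obtain h where h: "h \<in> B" "u = h + x" unfolding rc_def by auto
      then have "h + (x - y) \<in> B" using addsub_add[OF assms h(1) d] by simp
      moreover have "u = (h + (x - y)) + y" using h by simp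
      ultimately show "u \<in> rc B y" unfolding rc_def by blast
    qed
  next
    show "rc B y \<subseteq> rc B x"
    proof
      fix u assume "u \<in> rc B y"
      then obtain h where h: "h \<in> B" "u = h + y" unfolding rc_def by auto
      then have "h - (x - y) \<in> B" using addsub_diff[OF assms h(1) d] by simp
      moreover have "u = (h - (x - y)) + x" using h by simp
      ultimately show "u \<in> rc B x" unfolding rc_def by blast
    qed
  qed
qed

lemma rc_0: "addsub B \<Longrightarrow> rc B 0 = B"
  unfolding rc_def by auto

lemma rc_sum: "addsub B \<Longrightarrow> (\<Union>h1\<in>rc B x. \<Union>h2\<in>rc B y. {h1 + h2}) = rc B (x + y)"
proof -
  assume B: "addsub B"
  show ?thesis
  proof
    show "(\<Union>h1\<in>rc B x. \<Union>h2\<in>rc B y. {h1 + h2}) \<subseteq> rc B (x + y)"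
    proof
      fix u assume "u \<in> (\<Union>h1\<in>rc B x. \<Union>h2\<in>rc B y. {h1 + h2})"
      then obtain a b where ab: "a \<in> rc B x" "b \<in> rc B y" "u = a + b" by blast
      then obtain h1 h2 where h: "h1 \<in> B" "a = h1 + x" "h2 \<in> B" "b = h2 + y"
        unfolding rc_def by blast
      have "h1 + h2 \<in> B" using addsub_add[OF B h(1) h(3)] .
      moreover have "u = (h1 + h2) + (x + y)" using ab h by (simp add: algebra_simps)
      ultimately show "u \<in> rc B (x + y)" unfolding rc_def by blast
    qed
  next
    show "rc B (x + y) \<subseteq> (\<Union>h1\<in>rc B x. \<Union>h2\<in>rc B y. {h1 + h2})"
    proof
      fix u assume "u \<in> rc B (x + y)"
      then obtain h where h: "h \<in> B" "u = h + (x + y)" unfolding rc_def by auto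
      have "h + x \<in> rc B x" using h unfolding rc_def by auto
      moreover have "0 + y \<in> rc B y" using addsub_0[OF B] unfolding rc_def by blast
      moreover have "u = (h + x) + (0 + y)" using h by (simp add: algebra_simps)
      ultimately show "u \<in> (\<Union>h1\<in>rc B x. \<Union>h2\<in>rc B y. {h1 + h2})" by blast
    qed
  qed
qed

lemma Q_facts:
  assumes Z: "addsub Z" "Z \<subseteq> {c. Poly_Mapping.keys c \<subseteq> S}" and B: "addsub B" "B \<subseteq> Z"
  shows "group (Q S Z B)" "carrier (Q S Z B) = rc B ` Z" "one (Q S Z B) = B"
    "\<And>x y. x \<in> Z \<Longrightarrow> y \<in> Z \<Longrightarrow> rc B x \<otimes>\<^bsub>Q S Z B\<^esub> rc B y = rc B (x + y)"
proof -
  let ?G = "free_Abelian_group S"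
  let ?H = "subgroup_generated ?G Z"
  have sZ: "subgroup Z ?G" by (rule subgroup_addsub[OF Z])
  have sB: "subgroup B ?G" by (rule subgroup_addsub[OF B(1)]) (use B Z in auto)
  interpret G: comm_group ?G by (rule abelian_free_Abelian_group)
  have cH: "carrier ?H = Z" using subgroup.carrier_subgroup_generated_subgroup[OF sZ] .
  interpret H: comm_group ?H by (rule G.abelian_subgroup_generated[OF abelian_free_Abelian_group])
  have "subgroup B ?H"
    using G.subgroup_subgroup_generated_iff[of B Z] sB cH B by simp
  then have "normal B ?H" by (rule H.subgroup_imp_normal)
  then show "group (Q S Z B)" by (rule normal.factorgroup_is_group)
  have rcH: "B #>\<^bsub>?H\<^esub> a = rc B a" for a
    by (simp add: r_coset_def rc_def free_Abelian_group_def)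
  show "carrier (Q S Z B) = rc B ` Z"
    unfolding FactGroup_def RCOSETS_def using cH rcH by auto
  show "one (Q S Z B) = B" by (simp add: FactGroup_def)
  fix x y assume "x \<in> Z" "y \<in> Z"
  show "rc B x \<otimes>\<^bsub>Q S Z B\<^esub> rc B y = rc B (x + y)"
  proof -
    have "rc B x \<otimes>\<^bsub>Q S Z B\<^esub> rc B y = (\<Union>h1\<in>rc B x. \<Union>h2\<in>rc B y. {h1 + h2})"
      by (simp add: FactGroup_def set_mult_def free_Abelian_group_def)
    also have "\<dots> = rc B (x + y)" by (rule rc_sum[OF B(1)])
    finally show ?thesis .
  qed
qed

lemma ind_rc:
  assumes B: "addsub B" and B': "addsub B'" and f: "lin f" "f ` B \<subseteq> B'"
  shows "ind B' f (rc B z) = rc B' (f z)"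
proof -
  have "ind B' f (rc B z) = (\<Union>h\<in>B. rc B' (f h + f z))"
    unfolding ind_def rc_def using lin_add[OF f(1)] by auto
  also have "\<dots> = (\<Union>h\<in>B. rc B' (f z))"
  proof (rule SUP_cong[OF refl])
    fix h assume "h \<in> B"
    then have "f h \<in> B'" using f(2) by auto
    then show "rc B' (f h + f z) = rc B' (f z)" using rc_eq[OF B'] by simp
  qed
  also have "\<dots> = rc B' (f z)" using addsub_0[OF B] by auto
  finally show ?thesis .
qed

lemma ind_hom:
  assumes Z: "addsub Z" "Z \<subseteq> {c. Poly_Mapping.keys c \<subseteq> S}" and B: "addsub B" "B \<subseteq> Z"
  assumes Z': "addsub Z'" "Z' \<subseteq> {c. Poly_Mapping.keys c \<subseteq> S'}" and B': "addsub B'" "B' \<subseteq> Z'"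
  assumes f: "lin f" "f ` Z \<subseteq> Z'" "f ` B \<subseteq> B'"
  shows "ind B' f \<in> hom (Q S Z B) (Q S' Z' B')"
proof (rule homI)
  note QA = Q_facts[OF Z B] and QB = Q_facts[OF Z' B']
  fix X assume "X \<in> carrier (Q S Z B)"
  then obtain z where "z \<in> Z" "X = rc B z" using QA(2) by auto
  then show "ind B' f X \<in> carrier (Q S' Z' B')"
    using ind_rc[OF B(1) B'(1) f(1) f(3)] QB(2) f(2) by auto
next
  note QA = Q_facts[OF Z B] and QB = Q_facts[OF Z' B']
  fix X Y assume "X \<in> carrier (Q S Z B)" "Y \<in> carrier (Q S Z B)"
  then obtain x y where xy: "x \<in> Z" "X = rc B x" "y \<in> Z" "Y = rc B y" using QA(2) by auto
  have "X \<otimes>\<^bsub>Q S Z B\<^esub> Y = rc B (x + y)" using QA(4) xy by simp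
  then have "ind B' f (X \<otimes>\<^bsub>Q S Z B\<^esub> Y) = rc B' (f x + f y)"
    using ind_rc[OF B(1) B'(1) f(1) f(3)] lin_add[OF f(1)] by simp
  also have "\<dots> = rc B' (f x) \<otimes>\<^bsub>Q S' Z' B'\<^esub> rc B' (f y)"
    using QB(4) f(2) xy by auto
  finally show "ind B' f (X \<otimes>\<^bsub>Q S Z B\<^esub> Y) = ind B' f X \<otimes>\<^bsub>Q S' Z' B'\<^esub> ind B' f Y"
    using ind_rc[OF B(1) B'(1) f(1) f(3)] xy by simp
qed

lemma ind_exact:
  assumes Z1: "addsub Z1" "Z1 \<subseteq> {c. Poly_Mapping.keys c \<subseteq> S1}" and B1: "addsub B1" "B1 \<subseteq> Z1"
  assumes Z2: "addsub Z2" "Z2 \<subseteq> {c. Poly_Mapping.keys c \<subseteq> S2}" and B2: "addsub B2" "B2 \<subseteq> Z2"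
  assumes Z3: "addsub Z3" "Z3 \<subseteq> {c. Poly_Mapping.keys c \<subseteq> S3}" and B3: "addsub B3" "B3 \<subseteq> Z3"
  assumes f: "lin f" "f ` Z1 \<subseteq> Z2" "f ` B1 \<subseteq> B2"
  assumes g: "lin g" "g ` Z2 \<subseteq> Z3" "g ` B2 \<subseteq> B3"
  assumes ex: "\<And>z. z \<in> Z2 \<Longrightarrow> g z \<in> B3 \<longleftrightarrow> (\<exists>z1\<in>Z1. z - f z1 \<in> B2)"
  shows "kernel (Q S2 Z2 B2) (Q S3 Z3 B3) (ind B3 g) = ind B2 f ` carrier (Q S1 Z1 B1)"
proof -
  note Q1 = Q_facts[OF Z1 B1] and Q2 = Q_facts[OF Z2 B2] and Q3 = Q_facts[OF Z3 B3]
  note if1 = ind_rc[OF B1(1) B2(1) f(1) f(3)] and ig = ind_rc[OF B2(1) B3(1) g(1) g(3)]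
  show ?thesis
  proof
    show "kernel (Q S2 Z2 B2) (Q S3 Z3 B3) (ind B3 g) \<subseteq> ind B2 f ` carrier (Q S1 Z1 B1)"
    proof
      fix X assume "X \<in> kernel (Q S2 Z2 B2) (Q S3 Z3 B3) (ind B3 g)"
      then obtain z where z: "z \<in> Z2" "X = rc B2 z" "rc B3 (g z) = B3"
        unfolding kernel_def using Q2(2) Q3(3) ig by auto
      then have "rc B3 (g z) = rc B3 0" using rc_0[OF B3(1)] by simp
      then have "g z \<in> B3" using rc_eq[OF B3(1)] by simp
      then obtain z1 where z1: "z1 \<in> Z1" "z - f z1 \<in> B2" using ex z(1) by blast
      then have "X = ind B2 f (rc B1 z1)" using z(2) if1 rc_eq[OF B2(1)] by simp
      then show "X \<in> ind B2 f ` carrier (Q S1 Z1 B1)" using Q1(2) z1(1) by auto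
    qed
  next
    show "ind B2 f ` carrier (Q S1 Z1 B1) \<subseteq> kernel (Q S2 Z2 B2) (Q S3 Z3 B3) (ind B3 g)"
    proof
      fix X assume "X \<in> ind B2 f ` carrier (Q S1 Z1 B1)"
      then obtain z1 where z1: "z1 \<in> Z1" "X = rc B2 (f z1)" using Q1(2) if1 by auto
      have fz: "f z1 \<in> Z2" using f(2) z1 by auto
      have "f z1 - f z1 \<in> B2" using addsub_0[OF B2(1)] by simp
      then have "g (f z1) \<in> B3" using ex[OF fz] z1(1) by blast
      then have "rc B3 (g (f z1)) = rc B3 0" using rc_eq[OF B3(1)] by simp
      then show "X \<in> kernel (Q S2 Z2 B2) (Q S3 Z3 B3) (ind B3 g)"
        unfolding kernel_def using Q2(2) Q3(3) ig z1 fz rc_0[OF B3(1)] by auto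
    qed
  qed
qed



definition good :: "'a set set \<Rightarrow> bool" where
  "good K \<longleftrightarrow> (\<forall>\<sigma>\<in>K. finite \<sigma>) \<and> (\<forall>\<sigma>\<in>K. \<forall>\<tau>. \<tau> \<subseteq> \<sigma> \<longrightarrow> \<tau> \<in> K)"

abbreviation ch :: "'a set set \<Rightarrow> int \<Rightarrow> ('a set \<Rightarrow>\<^sub>0 int) set" where "ch K n \<equiv> {c. Poly_Mapping.keys c \<subseteq> simp_faces K n}"

lemma good_Ind: "finite V \<Longrightarrow> good (Ind V C)"
  unfolding good_def Ind_def by (auto intro: finite_subset)

lemma lin_bd: "lin simp_boundary"
  by (simp add: lin_def bd_add)

lemma keys_bd: "Poly_Mapping.keys (simp_boundary c) \<subseteq> (\<Union>\<sigma>\<in>Poly_Mapping.keys c. (\<lambda>v. \<sigma> - {v}) ` \<sigma>)"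
proof -
  have *: "Poly_Mapping.keys (simp_bd_simplex \<sigma>) \<subseteq> (\<lambda>v. \<sigma> - {v}) ` \<sigma>" for \<sigma> :: "'a set"
    unfolding simp_bd_simplex_def
    by (rule order_trans[OF keys_sum]) auto
  show ?thesis
    unfolding simp_boundary_def by (rule order_trans[OF keys_frag_extend], rule UN_mono[OF order_refl *])
qed

lemma bd_chain:
  assumes K: "good K" and c: "c \<in> ch K n" and e: "m + 1 = n"
  shows "simp_boundary c \<in> ch K m"
proof clarify
  fix \<tau> assume "\<tau> \<in> Poly_Mapping.keys (simp_boundary c)"
  then obtain \<sigma> v where s: "\<sigma> \<in> Poly_Mapping.keys c" "v \<in> \<sigma>" "\<tau> = \<sigma> - {v}"
    using keys_bd by blast
  then have sK: "\<sigma> \<in> K" "int (card \<sigma>) = n + 1" using c by (auto simp: simp_faces_def)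
  have fin: "finite \<sigma>" using K sK(1) by (auto simp: good_def)
  have "\<tau> \<in> K" using K sK(1) s(3) by (auto simp: good_def)
  moreover have "card \<tau> = card \<sigma> - 1" using s fin by simp
  moreover have "card \<sigma> \<ge> 1" using s fin by (metis card_0_eq empty_iff less_one not_le)
  ultimately show "\<tau> \<in> simp_faces K m" using sK(2) e by (auto simp: simp_faces_def)
qed

lemma addsub_ch: "addsub (ch K n)"
  unfolding addsub_def
proof (intro conjI ballI)
  show "0 \<in> ch K n" by simp
  fix x y assume "x \<in> ch K n" "y \<in> ch K n"
  then show "x - y \<in> ch K n" using keys_diff[of x y] by blast
qed

lemma addsub_image:
  assumes f: "lin f" and A: "addsub A" shows "addsub (f ` A)"
  unfolding addsub_def
proof (intro conjI ballI)
  show "0 \<in> f ` A" using lin_0[OF f] addsub_0[OF A] by (metis image_eqI)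
  fix x y assume "x \<in> f ` A" "y \<in> f ` A"
  then obtain a b where "a \<in> A" "b \<in> A" "x = f a" "y = f b" by blast
  then have "x - y = f (a - b)" "a - b \<in> A" using lin_diff[OF f, of a b] addsub_diff[OF A] by auto
  then show "x - y \<in> f ` A" using imageI[of "a - b" A f] by simp
qed

lemma addsub_kernel: "lin f \<Longrightarrow> addsub A \<Longrightarrow> addsub {c\<in>A. f c = 0}"
  unfolding addsub_def using lin_diff[of f] lin_0[of f] by auto

lemma cycles_alt: "simp_cycles K n = {c \<in> ch K n. simp_boundary c = 0}"
  by (simp add: simp_cycles_def simp_chain_group_def)

lemma bnds_alt: "simp_boundaries K n = simp_boundary ` ch K (n + 1)"
  by (simp add: simp_boundaries_def simp_chain_group_def free_Abelian_group_def)

lemma rh_alt: "reduced_homology K n = Q (simp_faces K n) (simp_cycles K n) (simp_boundaries K n)"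
  by (simp add: reduced_homology_def simp_chain_group_def)

definition okQ where
  "okQ S Z B \<longleftrightarrow> addsub Z \<and> Z \<subseteq> {c. Poly_Mapping.keys c \<subseteq> S} \<and> addsub B \<and> B \<subseteq> Z"

lemma okQ_complex:
  assumes "good K"
  shows "okQ (simp_faces K n) (simp_cycles K n) (simp_boundaries K n)"
  unfolding okQ_def
proof (intro conjI)
  show "addsub (simp_cycles K n)"
    unfolding cycles_alt by (rule addsub_kernel[OF lin_bd addsub_ch])
  show "simp_cycles K n \<subseteq> {c. Poly_Mapping.keys c \<subseteq> simp_faces K n}"
    unfolding cycles_alt by auto
  show "addsub (simp_boundaries K n)"
    unfolding bnds_alt by (rule addsub_image[OF lin_bd addsub_ch])
  show "simp_boundaries K n \<subseteq> simp_cycles K n"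
    unfolding bnds_alt cycles_alt using bd_chain[OF assms] bd_bd by blast
qed

lemma group_rh: "good K \<Longrightarrow> group (reduced_homology K n)"
  using okQ_complex[of K n] Q_facts(1) unfolding rh_alt okQ_def by blast

lemma hom_rh:
  assumes "good K" "good K'" "lin f"
    "f ` simp_cycles K n \<subseteq> simp_cycles K' n'" "f ` simp_boundaries K n \<subseteq> simp_boundaries K' n'"
  shows "ind (simp_boundaries K' n') f \<in> hom (reduced_homology K n) (reduced_homology K' n')"
  unfolding rh_alt
  using okQ_complex[OF assms(1), of n] okQ_complex[OF assms(2), of n'] assms(3-5)
  unfolding okQ_def by (intro ind_hom) auto

lemma okQ_D:
  assumes "good K"
  shows "addsub (simp_cycles K n)" "simp_cycles K n \<subseteq> {c. Poly_Mapping.keys c \<subseteq> simp_faces K n}"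
        "addsub (simp_boundaries K n)" "simp_boundaries K n \<subseteq> simp_cycles K n"
  using okQ_complex[OF assms, of n] unfolding okQ_def by auto

lemma exact_rh:
  assumes K: "good K1" "good K2" "good K3"
  assumes f: "lin f" "f ` simp_cycles K1 n1 \<subseteq> simp_cycles K2 n2" "f ` simp_boundaries K1 n1 \<subseteq> simp_boundaries K2 n2"
  assumes g: "lin g" "g ` simp_cycles K2 n2 \<subseteq> simp_cycles K3 n3" "g ` simp_boundaries K2 n2 \<subseteq> simp_boundaries K3 n3"
  assumes ex: "\<And>z. z \<in> simp_cycles K2 n2 \<Longrightarrow> g z \<in> simp_boundaries K3 n3 \<longleftrightarrow>
      (\<exists>z1\<in>simp_cycles K1 n1. z - f z1 \<in> simp_boundaries K2 n2)"
  shows "exact_seq ([reduced_homology K3 n3, reduced_homology K2 n2, reduced_homology K1 n1],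
                    [ind (simp_boundaries K3 n3) g, ind (simp_boundaries K2 n2) f])"
proof -
  have ker: "kernel (reduced_homology K2 n2) (reduced_homology K3 n3) (ind (simp_boundaries K3 n3) g)
     = ind (simp_boundaries K2 n2) f ` carrier (reduced_homology K1 n1)"
    unfolding rh_alt
    by (rule ind_exact[OF okQ_D[OF K(1)] okQ_D[OF K(2)] okQ_D[OF K(3)] f g ex])
  have gh: "group_hom (reduced_homology K1 n1) (reduced_homology K2 n2) (ind (simp_boundaries K2 n2) f)"
    unfolding group_hom_def group_hom_axioms_def
    using group_rh[OF K(1)] group_rh[OF K(2)] hom_rh[OF K(1) K(2) f] by simp
  have "exact_seq ([reduced_homology K2 n2, reduced_homology K1 n1], [ind (simp_boundaries K2 n2) f])"
    using gh by (rule exact_seq.unity)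
  then show ?thesis
    using exact_seq.extension[OF _ group_rh[OF K(3)] hom_rh[OF K(2) K(3) g] ker] by blast
qed



definition sgn2 :: "'a::linorder set \<Rightarrow> 'a set \<Rightarrow> int" where
  "sgn2 F \<tau> = (-1) ^ card {(f,t). f \<in> F \<and> t \<in> \<tau> \<and> f < t}"

definition phi :: "'a::linorder set \<Rightarrow> ('a set \<Rightarrow>\<^sub>0 int) \<Rightarrow> ('a set \<Rightarrow>\<^sub>0 int)" where
  "phi F = frag_extend (\<lambda>\<tau>. frag_cmul (sgn2 F \<tau>) (frag_of (F \<union> \<tau>)))"

definition psi :: "'a::linorder set \<Rightarrow> ('a set \<Rightarrow>\<^sub>0 int) \<Rightarrow> ('a set \<Rightarrow>\<^sub>0 int)" where
  "psi F = frag_extend (\<lambda>\<sigma>. if F \<subseteq> \<sigma> then frag_cmul (sgn2 F (\<sigma> - F)) (frag_of (\<sigma> - F)) else 0)"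

lemma sgn2_sq: "sgn2 F \<tau> * sgn2 F \<tau> = 1"
  by (simp add: sgn2_def flip: power_add)

lemma lin_phi: "lin (phi F)" by (simp add: lin_def phi_def frag_extend_add)
lemma lin_psi: "lin (psi F)" by (simp add: lin_def psi_def frag_extend_add)

lemma phi_of: "phi F (frag_of \<tau>) = frag_cmul (sgn2 F \<tau>) (frag_of (F \<union> \<tau>))"
  by (simp add: phi_def)
lemma psi_of: "psi F (frag_of \<sigma>) = (if F \<subseteq> \<sigma> then frag_cmul (sgn2 F (\<sigma> - F)) (frag_of (\<sigma> - F)) else 0)"
  by (simp add: psi_def)
lemma psi_cmul: "psi F (frag_cmul c x) = frag_cmul c (psi F x)"
  by (simp add: psi_def frag_extend_cmul)
lemma phi_cmul: "phi F (frag_cmul c x) = frag_cmul c (phi F x)"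
  by (simp add: phi_def frag_extend_cmul)
lemma psi_sum: "finite I \<Longrightarrow> psi F (\<Sum>i\<in>I. g i) = (\<Sum>i\<in>I. psi F (g i))"
  by (simp add: psi_def frag_extend_sum o_def)
lemma psi_0[simp]: "psi F 0 = 0" by (simp add: psi_def)
lemma phi_0[simp]: "phi F 0 = 0" by (simp add: phi_def)

lemma psi_phi_of: "\<tau> \<inter> F = {} \<Longrightarrow> psi F (phi F (frag_of \<tau>)) = frag_of \<tau>"
proof -
  assume d: "\<tau> \<inter> F = {}"
  then have e: "(F \<union> \<tau>) - F = \<tau>" by auto
  show ?thesis
    by (simp add: phi_of psi_cmul psi_of e sgn2_sq)
qed

lemma psi_phi:
  assumes "\<forall>\<tau>\<in>Poly_Mapping.keys c. \<tau> \<inter> F = {}"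
  shows "psi F (phi F c) = c"
proof -
  have "psi F (phi F c) = frag_extend (\<lambda>\<tau>. psi F (phi F (frag_of \<tau>))) c"
    unfolding phi_def psi_def frag_extend_extend by simp
  also have "\<dots> = frag_extend frag_of c"
  proof (rule frag_extend_eq)
    fix \<tau> assume "\<tau> \<in> Poly_Mapping.keys c"
    then have "\<tau> \<inter> F = {}" using assms by blast
    then show "psi F (phi F (frag_of \<tau>)) = frag_of \<tau>" by (rule psi_phi_of)
  qed
  finally show ?thesis by (simp flip: frag_expansion)
qed

definition restr :: "'a set \<Rightarrow> ('a set \<Rightarrow>\<^sub>0 int) \<Rightarrow> ('a set \<Rightarrow>\<^sub>0 int)" where
  "restr F = frag_extend (\<lambda>\<sigma>. if F \<subseteq> \<sigma> then frag_of \<sigma> else 0)"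

lemma phi_psi: "phi F (psi F c) = restr F c"
proof -
  have e: "F \<union> (\<sigma> - F) = \<sigma>" if "F \<subseteq> \<sigma>" for \<sigma> using that by auto
  have "phi F (psi F c) = frag_extend (\<lambda>\<sigma>. phi F (psi F (frag_of \<sigma>))) c"
    unfolding phi_def psi_def frag_extend_extend by simp
  also have "\<dots> = restr F c"
    unfolding restr_def
    by (rule frag_extend_eq) (auto simp: psi_of phi_cmul phi_of sgn2_sq sup.absorb2)
  finally show ?thesis .
qed

lemma keys_restr: "Poly_Mapping.keys (restr F c) \<subseteq> Poly_Mapping.keys c"
  unfolding restr_def by (rule order_trans[OF keys_frag_extend]) (auto split: if_split_asm)

lemma lookup_restr: "Poly_Mapping.lookup (restr F c) \<sigma> = (if F \<subseteq> \<sigma> then Poly_Mapping.lookup c \<sigma> else 0)"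
proof -
  have "Poly_Mapping.lookup (restr F c) \<sigma> = (if F \<subseteq> \<sigma> then Poly_Mapping.lookup c \<sigma> else 0)"
    using subset_UNIV
  proof (induction c rule: frag_induction)
    case zero then show ?case by (simp add: restr_def)
  next
    case (one x) then show ?case by (auto simp: restr_def)
  next
    case (diff a b) then show ?case by (simp add: restr_def frag_extend_diff lookup_minus)
  qed
  then show ?thesis .
qed

lemma psi_zero_keys:
  assumes "psi F x = 0" "\<sigma> \<in> Poly_Mapping.keys x"
  shows "\<not> F \<subseteq> \<sigma>"
proof
  assume "F \<subseteq> \<sigma>"
  have "restr F x = 0" using phi_psi[of F x] assms(1) by simp
  then have "Poly_Mapping.lookup x \<sigma> = 0" using lookup_restr[of F x \<sigma>] \<open>F \<subseteq> \<sigma>\<close> by simp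
  then show False using assms(2) by (simp add: in_keys_iff)
qed

lemma psi_vanish:
  assumes "\<forall>\<sigma>\<in>Poly_Mapping.keys x. \<not> F \<subseteq> \<sigma>"
  shows "psi F x = 0"
  unfolding psi_def by (rule frag_extend_eq_0) (use assms in auto)

lemma keys_phi: "Poly_Mapping.keys (phi F c) \<subseteq> (\<lambda>\<tau>. F \<union> \<tau>) ` Poly_Mapping.keys c"
  unfolding phi_def by (rule order_trans[OF keys_frag_extend]) auto

lemma keys_psi: "Poly_Mapping.keys (psi F c) \<subseteq> (\<lambda>\<sigma>. \<sigma> - F) ` {\<sigma>\<in>Poly_Mapping.keys c. F \<subseteq> \<sigma>}"
  unfolding psi_def by (rule order_trans[OF keys_frag_extend]) (auto split: if_split_asm)

lemma sign_lemma:
  fixes F \<sigma> :: "'a::linorder set"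
  assumes fin: "finite \<sigma>" and F: "F \<subseteq> \<sigma>" and v: "v \<in> \<sigma> - F"
  shows "sg \<sigma> v * sgn2 F (\<sigma> - F - {v}) = sgn2 F (\<sigma> - F) * sg (\<sigma> - F) v"
proof -
  let ?\<tau> = "\<sigma> - F"
  have finF: "finite F" using fin F finite_subset by blast
  have u: "{u\<in>\<sigma>. u < v} = {u\<in>?\<tau>. u < v} \<union> {u\<in>F. u < v}" using F by auto
  have c1: "card {u\<in>\<sigma>. u < v} = card {u\<in>?\<tau>. u < v} + card {u\<in>F. u < v}"
    unfolding u by (rule card_Un_disjoint) (use fin finF in auto)
  let ?A = "{(f,t). f \<in> F \<and> t \<in> ?\<tau> - {v} \<and> f < t}"
  let ?B = "(\<lambda>f. (f,v)) ` {u\<in>F. u < v}"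
  have s: "{(f,t). f \<in> F \<and> t \<in> ?\<tau> \<and> f < t} = ?A \<union> ?B" using v by auto
  have finA: "finite ?A"
    by (rule finite_subset[of _ "F \<times> \<sigma>"]) (use fin finF in auto)
  have c2: "card {(f,t). f \<in> F \<and> t \<in> ?\<tau> \<and> f < t} = card ?A + card {u\<in>F. u < v}"
    unfolding s
    by (subst card_Un_disjoint) (use finA finF in \<open>auto simp: card_image inj_on_def\<close>)
  show ?thesis
    unfolding sg_def sgn2_def c1 c2 by (simp add: power_add mult_ac)
qed

lemma psi_bd_of:
  fixes F :: "'a::linorder set"
  assumes finF: "finite F"
  shows "psi F (simp_boundary (frag_of \<sigma>)) = simp_boundary (psi F (frag_of \<sigma>))"
proof (cases "finite \<sigma>")
  case False
  then have "infinite (\<sigma> - F)" using finF by auto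
  then show ?thesis using False
    by (simp add: bd_of psi_of simp_bd_simplex_def bd_cmul)
next
  case fin: True
  have lhs: "psi F (simp_boundary (frag_of \<sigma>)) =
      (\<Sum>v\<in>\<sigma>. frag_cmul (sg \<sigma> v) (psi F (frag_of (\<sigma> - {v}))))"
    using fin by (simp add: bd_of bd_simplex_sg psi_sum psi_cmul)
  show ?thesis
  proof (cases "F \<subseteq> \<sigma>")
    case False
    then have "psi F (frag_of (\<sigma> - {v})) = 0" for v by (auto simp: psi_of)
    then show ?thesis using lhs False by (simp add: psi_of)
  next
    case True
    let ?\<tau> = "\<sigma> - F"
    have "(\<Sum>v\<in>\<sigma>. frag_cmul (sg \<sigma> v) (psi F (frag_of (\<sigma> - {v}))))
        = (\<Sum>v\<in>?\<tau>. frag_cmul (sg \<sigma> v) (psi F (frag_of (\<sigma> - {v}))))"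
    proof (rule sum.mono_neutral_right)
      show "finite \<sigma>" by (rule fin)
      show "?\<tau> \<subseteq> \<sigma>" by auto
      show "\<forall>i\<in>\<sigma> - ?\<tau>. frag_cmul (sg \<sigma> i) (psi F (frag_of (\<sigma> - {i}))) = 0"
        by (auto simp: psi_of)
    qed
    also have "\<dots> = (\<Sum>v\<in>?\<tau>. frag_cmul (sgn2 F ?\<tau> * sg ?\<tau> v) (frag_of (?\<tau> - {v})))"
    proof (rule sum.cong[OF refl])
      fix v assume v: "v \<in> ?\<tau>"
      then have "F \<subseteq> \<sigma> - {v}" "\<sigma> - {v} - F = \<sigma> - F - {v}" using True by auto
      then show "frag_cmul (sg \<sigma> v) (psi F (frag_of (\<sigma> - {v}))) =
                 frag_cmul (sgn2 F ?\<tau> * sg ?\<tau> v) (frag_of (?\<tau> - {v}))"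
        using sign_lemma[OF fin True v] by (simp add: psi_of)
    qed
    also have "\<dots> = simp_boundary (psi F (frag_of \<sigma>))"
      using True fin by (simp add: psi_of bd_cmul bd_of bd_simplex_sg frag_cmul_sum)
    finally show ?thesis using lhs by simp
  qed
qed

lemma psi_bd:
  fixes F :: "'a::linorder set"
  assumes finF: "finite F"
  shows "psi F (simp_boundary c) = simp_boundary (psi F c)"
  using subset_UNIV
proof (induction c rule: frag_induction)
  case zero then show ?case by simp
next
  case (one x) then show ?case using psi_bd_of[OF finF] by simp
next
  case (diff a b) then show ?case
    by (simp add: bd_diff lin_diff[OF lin_psi])
qed



locale hg =
  fixes V :: "'a::linorder set" and C :: "'a set set" and F :: "'a set"
  assumes hyp: "hypergraph V C" and FC: "F \<in> C"
begin

abbreviation "K1 \<equiv> Ind V C"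
abbreviation "K2 \<equiv> Ind V (hdel C F)"
abbreviation "W \<equiv> hcolon_vertices V C F"
abbreviation "EL \<equiv> hcolon_edges C F"
abbreviation "L \<equiv> Ind W EL"

lemma finV: "finite V" using hyp by (simp add: hypergraph_def)
lemma edges: "E \<in> C \<Longrightarrow> E \<subseteq> V \<and> card E \<ge> 2" using hyp by (simp add: hypergraph_def)
lemma incomp: "E \<in> C \<Longrightarrow> E' \<in> C \<Longrightarrow> E \<subseteq> E' \<Longrightarrow> E = E'" using hyp by (simp add: hypergraph_def)
lemma finF: "finite F" using edges[OF FC] finV finite_subset by blast
lemma FV: "F \<subseteq> V" using edges[OF FC] by blast
lemma finC: "finite C"
  by (rule finite_subset[of _ "Pow V"]) (use edges finV in auto)

lemma good1: "good K1" by (rule good_Ind[OF finV])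
lemma good2: "good K2" by (rule good_Ind[OF finV])
lemma goodL: "good L"
  by (rule good_Ind) (use finV in \<open>simp add: hcolon_vertices_def\<close>)

lemma C1: "K1 \<subseteq> K2"
  unfolding Ind_def hdel_def by auto

lemma C2: "\<sigma> \<in> K2 \<Longrightarrow> \<not> F \<subseteq> \<sigma> \<Longrightarrow> \<sigma> \<in> K1"
  unfolding Ind_def hdel_def by auto

lemma notF_K1: "\<sigma> \<in> K1 \<Longrightarrow> \<not> F \<subseteq> \<sigma>"
  unfolding Ind_def using FC by auto

lemma C3:
  assumes "\<tau> \<in> L"
  shows "\<tau> \<inter> F = {}" "F \<union> \<tau> \<in> K2"
proof -
  have tau: "\<tau> \<subseteq> V - (F \<union> hnbhd C F)" "\<forall>A\<in>EL. \<not> A \<subseteq> \<tau>"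
    using assms by (auto simp: Ind_def hcolon_vertices_def)
  then show "\<tau> \<inter> F = {}" by auto
  let ?M = "{E - F | E. E \<in> hdel C F}"
  have finM: "finite ?M" using finC by (simp add: hdel_def)
  have "\<not> E \<subseteq> F \<union> \<tau>" if E: "E \<in> hdel C F" for E
  proof
    assume sub: "E \<subseteq> F \<union> \<tau>"
    have "E - F \<in> ?M" using E by blast
    from finite_has_minimal2[OF finM this]
    obtain A where A0: "A \<in> ?M" and A1: "A \<le> E - F \<and> (\<forall>B\<in>?M. B \<le> A \<longrightarrow> A = B)" ..
    have A: "A \<in> ?M" "A \<subseteq> E - F" "\<forall>B\<in>?M. B \<subseteq> A \<longrightarrow> A = B" using A0 A1 by simp_all
    then obtain E' where E': "E' \<in> hdel C F" "A = E' - F" by blast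
    have E'C: "E' \<in> C" "E' \<noteq> F" using E' by (auto simp: hdel_def)
    have "A \<noteq> {}"
    proof
      assume "A = {}"
      then have "E' \<subseteq> F" using E' by auto
      then show False using incomp[OF E'C(1) FC] E'C(2) by blast
    qed
    have Atau: "A \<subseteq> \<tau>" using A(2) sub by auto
    show False
    proof (cases "card A \<ge> 2")
      case True
      then have "A \<in> EL" unfolding hcolon_edges_def Let_def using A by blast
      then show False using tau(2) Atau by blast
    next
      case False
      have "A \<subseteq> V" using Atau tau(1) by blast
      then have finA: "finite A" using finite_subset finV by blast
      then have "card A \<noteq> 0" using \<open>A \<noteq> {}\<close> by simp
      then have "card A = 1" using False by linarith
      then have "A \<subseteq> hnbhd C F" unfolding hnbhd_def using E' E'C by blast
      then show False using Atau tau(1) \<open>A \<noteq> {}\<close> by blast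
    qed
  qed
  moreover have "F \<union> \<tau> \<subseteq> V" using FV tau(1) by auto
  ultimately show "F \<union> \<tau> \<in> K2" unfolding Ind_def by blast
qed

lemma C4:
  assumes s: "\<sigma> \<in> K2" and F: "F \<subseteq> \<sigma>"
  shows "\<sigma> - F \<in> L"
proof -
  have sV: "\<sigma> \<subseteq> V" and no: "\<forall>E\<in>hdel C F. \<not> E \<subseteq> \<sigma>" using s by (auto simp: Ind_def)
  have "\<sigma> \<inter> hnbhd C F = {}"
  proof (rule ccontr)
    assume "\<sigma> \<inter> hnbhd C F \<noteq> {}"
    then obtain v E where v: "v \<in> \<sigma>" "E \<in> C" "card (E - F) = 1" "v \<in> E - F"
      unfolding hnbhd_def by blast
    then have "E - F = {v}" by (metis card_1_singletonE singletonD)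
    then have "E \<subseteq> \<sigma>" using F v(1) by auto
    moreover have "E \<noteq> F" using v by auto
    ultimately show False using no v(2) by (auto simp: hdel_def)
  qed
  then have "\<sigma> - F \<subseteq> W" using sV by (auto simp: hcolon_vertices_def)
  moreover have "\<not> A \<subseteq> \<sigma> - F" if "A \<in> EL" for A
  proof
    assume "A \<subseteq> \<sigma> - F"
    obtain E where "E \<in> hdel C F" "A = E - F" using \<open>A \<in> EL\<close> unfolding hcolon_edges_def Let_def by blast
    then have "E \<subseteq> \<sigma>" using \<open>A \<subseteq> \<sigma> - F\<close> F by auto
    then show False using no \<open>E \<in> hdel C F\<close> by blast
  qed
  ultimately show ?thesis unfolding Ind_def by blast
qed

end



context hg begin

abbreviation "nF \<equiv> int (card F)"

lemma phi_ch:
  assumes c: "c \<in> ch L j" and m: "m = j + nF"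
  shows "phi F c \<in> ch K2 m"
proof clarify
  fix \<sigma> assume "\<sigma> \<in> Poly_Mapping.keys (phi F c)"
  then obtain \<tau> where t: "\<tau> \<in> Poly_Mapping.keys c" "\<sigma> = F \<union> \<tau>" using keys_phi by blast
  then have tL: "\<tau> \<in> L" "int (card \<tau>) = j + 1" using c by (auto simp: simp_faces_def)
  have fin: "finite \<tau>" using goodL tL(1) by (auto simp: good_def)
  have "card \<sigma> = card F + card \<tau>"
    unfolding t(2) by (rule card_Un_disjoint) (use finF fin C3(1)[OF tL(1)] in auto)
  then show "\<sigma> \<in> simp_faces K2 m"
    using C3(2)[OF tL(1)] t(2) tL(2) m by (auto simp: simp_faces_def)
qed

lemma psi_ch:
  assumes c: "c \<in> ch K2 i" and m: "m = i - nF"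
  shows "psi F c \<in> ch L m"
proof clarify
  fix \<tau> assume "\<tau> \<in> Poly_Mapping.keys (psi F c)"
  then obtain \<sigma> where s: "\<sigma> \<in> Poly_Mapping.keys c" "F \<subseteq> \<sigma>" "\<tau> = \<sigma> - F" using keys_psi by blast
  then have sK: "\<sigma> \<in> K2" "int (card \<sigma>) = i + 1" using c by (auto simp: simp_faces_def)
  have fin: "finite \<sigma>" using good2 sK(1) by (auto simp: good_def)
  have "card \<tau> = card \<sigma> - card F" unfolding s(3) by (rule card_Diff_subset[OF finF s(2)])
  moreover have "card F \<le> card \<sigma>" by (rule card_mono[OF fin s(2)])
  ultimately have "int (card \<tau>) = m + 1" using sK(2) m by simp
  then show "\<tau> \<in> simp_faces L m"
    using C4[OF sK(1) s(2)] s(3) by (auto simp: simp_faces_def)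
qed

lemma K12: "c \<in> ch K1 i \<Longrightarrow> c \<in> ch K2 i"
  using C1 by (auto simp: simp_faces_def)

lemma toK1: "c \<in> ch K2 i \<Longrightarrow> psi F c = 0 \<Longrightarrow> c \<in> ch K1 i"
  using C2 psi_zero_keys by (fastforce simp: simp_faces_def)

lemma psiK1: "c \<in> ch K1 i \<Longrightarrow> psi F c = 0"
  by (rule psi_vanish) (use notF_K1 in \<open>auto simp: simp_faces_def\<close>)

lemma psiphiL: "c \<in> ch L j \<Longrightarrow> psi F (phi F c) = c"
  by (rule psi_phi) (use C3(1) in \<open>auto simp: simp_faces_def\<close>)

lemma psi_psi: "psi F (phi F (psi F c)) = psi F c"
  by (rule psi_phi) (use keys_psi in blast)

lemma decomp:
  assumes c: "c \<in> ch K2 i"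
  shows "c - phi F (psi F c) \<in> ch K1 i"
proof (rule toK1)
  have "Poly_Mapping.keys (c - phi F (psi F c)) \<subseteq> Poly_Mapping.keys c"
    using keys_diff[of c "phi F (psi F c)"] keys_restr[of F c] by (auto simp: phi_psi)
  then show "c - phi F (psi F c) \<in> ch K2 i" using c by blast
  show "psi F (c - phi F (psi F c)) = 0"
    by (simp add: lin_diff[OF lin_psi] psi_psi)
qed

lemma bdch: "good K \<Longrightarrow> c \<in> ch K n \<Longrightarrow> m = n - 1 \<Longrightarrow> simp_boundary c \<in> ch K m"
  by (rule bd_chain) auto

lemma Ulem:
  assumes w: "w \<in> ch L (j + 1)" and k: "k = j + nF"
  shows "phi F (simp_boundary w) - simp_boundary (phi F w) \<in> ch K1 k"
proof (rule toK1)
  have bw: "simp_boundary w \<in> ch L j" by (rule bdch[OF goodL w]) simp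
  have a: "phi F (simp_boundary w) \<in> ch K2 k" by (rule phi_ch[OF bw k])
  have b: "phi F w \<in> ch K2 (k + 1)" by (rule phi_ch[OF w]) (simp add: k)
  have b': "simp_boundary (phi F w) \<in> ch K2 k" by (rule bdch[OF good2 b]) simp
  show "phi F (simp_boundary w) - simp_boundary (phi F w) \<in> ch K2 k"
    using addsub_diff[OF addsub_ch a b'] .
  show "psi F (phi F (simp_boundary w) - simp_boundary (phi F w)) = 0"
    by (simp add: lin_diff[OF lin_psi] psi_bd[OF finF] psiphiL[OF bw] psiphiL[OF w])
qed

lemma D1:
  assumes y: "y \<in> simp_cycles L j" and e: "j + nF = i + 1"
  shows "simp_boundary (phi F y) \<in> simp_cycles K1 i"
proof -
  have yc: "y \<in> ch L j" "simp_boundary y = 0" using y by (auto simp: cycles_alt)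
  have "phi F y \<in> ch K2 (i + 1)" by (rule phi_ch[OF yc(1)]) (use e in simp)
  then have b: "simp_boundary (phi F y) \<in> ch K2 i" by (rule bdch[OF good2]) simp
  have "psi F (simp_boundary (phi F y)) = 0"
    by (simp add: psi_bd[OF finF] psiphiL[OF yc(1)] yc(2))
  then have "simp_boundary (phi F y) \<in> ch K1 i" using toK1[OF b] by blast
  then show ?thesis by (simp add: cycles_alt bd_bd)
qed

lemma D2:
  assumes y: "y \<in> simp_boundaries L j" and e: "j + nF = i + 1"
  shows "simp_boundary (phi F y) \<in> simp_boundaries K1 i"
proof -
  obtain w where w: "w \<in> ch L (j + 1)" "y = simp_boundary w" using y by (auto simp: bnds_alt)
  have u: "phi F (simp_boundary w) - simp_boundary (phi F w) \<in> ch K1 (i + 1)"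
    by (rule Ulem[OF w(1)]) (use e in simp)
  have "simp_boundary (phi F y) = simp_boundary (phi F (simp_boundary w) - simp_boundary (phi F w))"
    by (simp add: w(2) bd_diff bd_bd)
  then show ?thesis using u by (simp add: bnds_alt)
qed

lemma D3: "simp_cycles K1 i \<subseteq> simp_cycles K2 i" "simp_boundaries K1 i \<subseteq> simp_boundaries K2 i"
  using K12 by (auto simp: cycles_alt bnds_alt)

lemma D4:
  assumes z: "z \<in> simp_cycles K2 i" and m: "m = i - nF"
  shows "psi F z \<in> simp_cycles L m"
  using z psi_ch[OF _ m, of z] by (auto simp: cycles_alt psi_bd[OF finF, symmetric])

lemma D5:
  assumes z: "z \<in> simp_boundaries K2 i" and m: "m = i - nF"
  shows "psi F z \<in> simp_boundaries L m"
proof -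
  obtain w where w: "w \<in> ch K2 (i + 1)" "z = simp_boundary w" using z by (auto simp: bnds_alt)
  have "psi F w \<in> ch L (m + 1)" by (rule psi_ch[OF w(1)]) (use m in simp)
  then show ?thesis using w(2) by (simp add: bnds_alt psi_bd[OF finF])
qed

end



context hg begin

lemma E1:
  assumes z: "z \<in> simp_cycles K1 i" and e: "j + nF = i + 1"
  shows "id z \<in> simp_boundaries K2 i \<longleftrightarrow>
    (\<exists>y\<in>simp_cycles L j. z - simp_boundary (phi F y) \<in> simp_boundaries K1 i)"
proof
  assume "id z \<in> simp_boundaries K2 i"
  then obtain w where w: "w \<in> ch K2 (i + 1)" "z = simp_boundary w" by (auto simp: bnds_alt)
  have zc: "z \<in> ch K1 i" using z by (simp add: cycles_alt)
  have yc: "psi F w \<in> ch L j" by (rule psi_ch[OF w(1)]) (use e in simp)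
  have "simp_boundary (psi F w) = psi F z" by (simp add: w(2) psi_bd[OF finF])
  also have "\<dots> = 0" by (rule psiK1[OF zc])
  finally have y: "psi F w \<in> simp_cycles L j" using yc by (simp add: cycles_alt)
  have a: "w - phi F (psi F w) \<in> ch K1 (i + 1)" by (rule decomp[OF w(1)])
  have "z - simp_boundary (phi F (psi F w)) = simp_boundary (w - phi F (psi F w))"
    by (simp add: w(2) bd_diff)
  then have "z - simp_boundary (phi F (psi F w)) \<in> simp_boundaries K1 i"
    using a by (simp add: bnds_alt)
  then show "\<exists>y\<in>simp_cycles L j. z - simp_boundary (phi F y) \<in> simp_boundaries K1 i"
    using y by blast
next
  assume "\<exists>y\<in>simp_cycles L j. z - simp_boundary (phi F y) \<in> simp_boundaries K1 i"
  then obtain y a where y: "y \<in> simp_cycles L j" and a: "a \<in> ch K1 (i + 1)"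
    and eq: "z - simp_boundary (phi F y) = simp_boundary a" by (auto simp: bnds_alt)
  have py: "phi F y \<in> ch K2 (i + 1)" by (rule phi_ch) (use y e in \<open>auto simp: cycles_alt\<close>)
  have s: "a + phi F y \<in> ch K2 (i + 1)" using addsub_add[OF addsub_ch K12[OF a] py] .
  have "z = simp_boundary (a + phi F y)" using eq by (simp add: bd_add algebra_simps)
  then show "id z \<in> simp_boundaries K2 i" using s by (simp add: bnds_alt)
qed

lemma E2:
  assumes z: "z \<in> simp_cycles K2 i" and m: "m = i - nF"
  shows "psi F z \<in> simp_boundaries L m \<longleftrightarrow>
    (\<exists>z1\<in>simp_cycles K1 i. z - id z1 \<in> simp_boundaries K2 i)"
proof
  assume "psi F z \<in> simp_boundaries L m"
  then obtain y where y: "y \<in> ch L (m + 1)" "psi F z = simp_boundary y" by (auto simp: bnds_alt)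
  have zc: "z \<in> ch K2 i" "simp_boundary z = 0" using z by (auto simp: cycles_alt)
  have py: "phi F y \<in> ch K2 (i + 1)" by (rule phi_ch[OF y(1)]) (use m in simp)
  have bpy: "simp_boundary (phi F y) \<in> ch K2 i" by (rule bdch[OF good2 py]) simp
  let ?z1 = "z - simp_boundary (phi F y)"
  have "?z1 \<in> ch K2 i" using addsub_diff[OF addsub_ch zc(1) bpy] .
  moreover have "psi F ?z1 = 0"
    by (simp add: lin_diff[OF lin_psi] psi_bd[OF finF] psiphiL[OF y(1)] y(2))
  ultimately have "?z1 \<in> ch K1 i" by (rule toK1)
  then have z1: "?z1 \<in> simp_cycles K1 i" by (simp add: cycles_alt bd_diff bd_bd zc(2))
  have "z - id ?z1 \<in> simp_boundaries K2 i" using py by (simp add: bnds_alt)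
  then show "\<exists>z1\<in>simp_cycles K1 i. z - id z1 \<in> simp_boundaries K2 i" using z1 by blast
next
  assume "\<exists>z1\<in>simp_cycles K1 i. z - id z1 \<in> simp_boundaries K2 i"
  then obtain z1 w where z1: "z1 \<in> simp_cycles K1 i" and w: "w \<in> ch K2 (i + 1)"
    and eq: "z - z1 = simp_boundary w" by (auto simp: bnds_alt)
  have "z1 \<in> ch K1 i" using z1 by (simp add: cycles_alt)
  then have "psi F z1 = 0" by (rule psiK1)
  then have "psi F z = psi F (z - z1)" by (simp add: lin_diff[OF lin_psi])
  also have "\<dots> = simp_boundary (psi F w)" by (simp add: eq psi_bd[OF finF])
  finally have e2: "psi F z = simp_boundary (psi F w)" .
  have "psi F w \<in> ch L (m + 1)" by (rule psi_ch[OF w]) (use m in simp)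
  then show "psi F z \<in> simp_boundaries L m" using e2 by (simp add: bnds_alt)
qed

lemma E3:
  assumes y: "y \<in> simp_cycles L j" and e: "j + nF = i"
  shows "simp_boundary (phi F y) \<in> simp_boundaries K1 (i - 1) \<longleftrightarrow>
    (\<exists>z\<in>simp_cycles K2 i. y - psi F z \<in> simp_boundaries L j)"
proof
  assume "simp_boundary (phi F y) \<in> simp_boundaries K1 (i - 1)"
  then obtain a where a: "a \<in> ch K1 i" "simp_boundary (phi F y) = simp_boundary a"
    by (auto simp: bnds_alt)
  have yc: "y \<in> ch L j" using y by (simp add: cycles_alt)
  have py: "phi F y \<in> ch K2 i" by (rule phi_ch[OF yc]) (use e in simp)
  let ?z = "phi F y - a"
  have "?z \<in> ch K2 i" using addsub_diff[OF addsub_ch py K12[OF a(1)]] .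
  then have zc: "?z \<in> simp_cycles K2 i" using a(2) by (simp add: cycles_alt bd_diff)
  have "psi F ?z = y" by (simp add: lin_diff[OF lin_psi] psiphiL[OF yc] psiK1[OF a(1)])
  then have "y - psi F ?z \<in> simp_boundaries L j"
    using addsub_0[OF okQ_D(3)[OF goodL]] by simp
  then show "\<exists>z\<in>simp_cycles K2 i. y - psi F z \<in> simp_boundaries L j" using zc by blast
next
  assume "\<exists>z\<in>simp_cycles K2 i. y - psi F z \<in> simp_boundaries L j"
  then obtain z w where z: "z \<in> simp_cycles K2 i" and w: "w \<in> ch L (j + 1)"
    and eq: "y - psi F z = simp_boundary w" by (auto simp: bnds_alt)
  have zc: "z \<in> ch K2 i" "simp_boundary z = 0" using z by (auto simp: cycles_alt)
  have a: "z - phi F (psi F z) \<in> ch K1 i" by (rule decomp[OF zc(1)])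
  have u: "phi F (simp_boundary w) - simp_boundary (phi F w) \<in> ch K1 i"
    by (rule Ulem[OF w]) (use e in simp)
  have yy: "y = psi F z + simp_boundary w" using eq by (simp add: algebra_simps)
  have "simp_boundary (phi F y) =
     simp_boundary ((phi F (simp_boundary w) - simp_boundary (phi F w)) - (z - phi F (psi F z)))"
    by (simp add: yy lin_add[OF lin_phi] bd_add bd_diff bd_bd zc(2))
  moreover have "(phi F (simp_boundary w) - simp_boundary (phi F w)) - (z - phi F (psi F z)) \<in> ch K1 (i - 1 + 1)"
    using addsub_diff[OF addsub_ch u a] by simp
  ultimately show "simp_boundary (phi F y) \<in> simp_boundaries K1 (i - 1)"
    unfolding bnds_alt by (metis image_eqI)
qed

end



context hg begin

lemma lin_delta: "lin (\<lambda>y. simp_boundary (phi F y))"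
  by (simp add: lin_def lin_add[OF lin_phi] bd_add)

lemma lin_id: "lin id" by (simp add: lin_def)

lemma img_D1: "j + nF = i + 1 \<Longrightarrow> (\<lambda>y. simp_boundary (phi F y)) ` simp_cycles L j \<subseteq> simp_cycles K1 i"
  using D1 by blast
lemma img_D2: "j + nF = i + 1 \<Longrightarrow> (\<lambda>y. simp_boundary (phi F y)) ` simp_boundaries L j \<subseteq> simp_boundaries K1 i"
  using D2 by blast
lemma img_D4: "m = i - nF \<Longrightarrow> psi F ` simp_cycles K2 i \<subseteq> simp_cycles L m"
  using D4 by blast
lemma img_D5: "m = i - nF \<Longrightarrow> psi F ` simp_boundaries K2 i \<subseteq> simp_boundaries L m"
  using D5 by blast

lemma main_step:
  fixes i :: int
  defines "f \<equiv> \<lambda>i. ind (simp_boundaries K1 i) (\<lambda>y. simp_boundary (phi F y))"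
    and "g \<equiv> \<lambda>i. ind (simp_boundaries K2 i) id"
    and "h \<equiv> \<lambda>i. ind (simp_boundaries L (i - nF)) (psi F)"
  shows
     "f i \<in> hom (reduced_homology L (i - nF + 1)) (reduced_homology K1 i) \<and>
     g i \<in> hom (reduced_homology K1 i) (reduced_homology K2 i) \<and>
     h i \<in> hom (reduced_homology K2 i) (reduced_homology L (i - nF)) \<and>
     exact_seq ([reduced_homology K2 i, reduced_homology K1 i, reduced_homology L (i - nF + 1)],
                [g i, f i]) \<and>
     exact_seq ([reduced_homology L (i - nF), reduced_homology K2 i, reduced_homology K1 i],
                [h i, g i]) \<and>
     exact_seq ([reduced_homology K1 (i - 1), reduced_homology L (i - nF), reduced_homology K2 i],
                [f (i - 1), h i])"
proof (intro conjI)
  have e1: "(i - nF + 1) + nF = i + 1" by simp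
  have e3: "(i - nF) + nF = (i - 1) + 1" by simp
  show "f i \<in> hom (reduced_homology L (i - nF + 1)) (reduced_homology K1 i)"
    unfolding f_def by (rule hom_rh[OF goodL good1 lin_delta img_D1[OF e1] img_D2[OF e1]])
  show "g i \<in> hom (reduced_homology K1 i) (reduced_homology K2 i)"
    unfolding g_def by (rule hom_rh[OF good1 good2 lin_id]) (use D3 in auto)
  show "h i \<in> hom (reduced_homology K2 i) (reduced_homology L (i - nF))"
    unfolding h_def by (rule hom_rh[OF good2 goodL lin_psi img_D4 img_D5]) simp_all
  show "exact_seq ([reduced_homology K2 i, reduced_homology K1 i, reduced_homology L (i - nF + 1)],
                [g i, f i])"
    unfolding f_def g_def
    by (rule exact_rh[OF goodL good1 good2 lin_delta img_D1[OF e1] img_D2[OF e1] lin_id])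
       (use D3 E1[OF _ e1] in auto)
  show "exact_seq ([reduced_homology L (i - nF), reduced_homology K2 i, reduced_homology K1 i],
                [h i, g i])"
    unfolding g_def h_def
    by (rule exact_rh[OF good1 good2 goodL lin_id _ _ lin_psi img_D4 img_D5])
       (use D3 E2 in auto)
  show "exact_seq ([reduced_homology K1 (i - 1), reduced_homology L (i - nF), reduced_homology K2 i],
                [f (i - 1), h i])"
    unfolding f_def h_def
    by (rule exact_rh[OF good2 goodL good1 lin_psi img_D4 img_D5 lin_delta img_D1[OF e3] img_D2[OF e3]])
       (use E3 in auto)
qed

end

theorem theorem3p1:
  fixes V :: "'a::linorder set" and C :: "'a set set" and F :: "'a set"
  assumes "hypergraph V C" and "F \<in> C"
  shows "\<exists>f g h. \<forall>i::int.
     f i \<in> hom (reduced_homology (Ind (hcolon_vertices V C F) (hcolon_edges C F)) (i - int (card F) + 1))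
               (reduced_homology (Ind V C) i) \<and>
     g i \<in> hom (reduced_homology (Ind V C) i) (reduced_homology (Ind V (hdel C F)) i) \<and>
     h i \<in> hom (reduced_homology (Ind V (hdel C F)) i)
               (reduced_homology (Ind (hcolon_vertices V C F) (hcolon_edges C F)) (i - int (card F))) \<and>
     exact_seq ([reduced_homology (Ind V (hdel C F)) i, reduced_homology (Ind V C) i,
                 reduced_homology (Ind (hcolon_vertices V C F) (hcolon_edges C F)) (i - int (card F) + 1)],
                [g i, f i]) \<and>
     exact_seq ([reduced_homology (Ind (hcolon_vertices V C F) (hcolon_edges C F)) (i - int (card F)),
                 reduced_homology (Ind V (hdel C F)) i, reduced_homology (Ind V C) i],
                [h i, g i]) \<and>
     exact_seq ([reduced_homology (Ind V C) (i - 1),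
                 reduced_homology (Ind (hcolon_vertices V C F) (hcolon_edges C F)) (i - int (card F)),
                 reduced_homology (Ind V (hdel C F)) i],
                [f (i - 1), h i])"
proof -
  interpret hg V C F using assms by unfold_locales
  show ?thesis
    by (intro exI allI) (rule main_step)
qed


end
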